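(* Let $\sigma\ge0$, $\gamma>0$, $V=\sqrt{1+\sigma}$, let $(n^\varepsilon,u^\varepsilon,\phi^\varepsilon)$ be the solitary wave solution and $\phi_R^\varepsilon=\phi^\varepsilon-\varepsilon n_{\mathrm{KdV}}$. There is $\varepsilon_1>0$ such that for every fixed $\xi_*>0$ there exists a constant $C_{\xi_*}>0$ (independent of $\varepsilon$, depending on $\xi_*$) with \[ \sup_{\xi\in[0,\xi_*]}\big(|(\phi_R^\varepsilon)'(\xi)|^2+|\phi_R^\varepsilon(\xi)|^2\big)\le C_{\xi_*}\varepsilon^4\qquad\text{for all }0<\varepsilon<\varepsilon_1. \]
   Context: For $\varepsilon>0$, consider the system in $\xi\in\mathbb{R}$: $-(V+\gamma\varepsilon)n'+(nu)'=0$, $-(V+\gamma\varepsilon)u'+uu'+\sigma n'/n=-\phi'$, $\varepsilon\phi''=e^\phi-n$, with $n\to1,u\to0,\phi\to0$ as $|\xi|\to\infty$. With $V=\sqrt{1+\sigma}$, for all sufficiently small $\varepsilon>0$ it has a non-trivial smooth solution unique up to translation; the "solitary wave solution" $(n^\varepsilon,u^\varepsilon,\phi^\varepsilon)$ is the translate that is even in $\xi$ and has all components strictly decreasing on $(0,\infty)$. Here $n_{\mathrm{KdV}}(\xi)=\frac{3\gamma}{V}\operatorname{sech}^2(\sqrt{V\gamma/2}\,\xi)$. *)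

theory Defs
  imports "HOL-Analysis.Analysis"
begin

definition smooth_fun :: "(real \<Rightarrow> real) \<Rightarrow> bool" where
  "smooth_fun f \<longleftrightarrow> (\<forall>k x. ((deriv ^^ k) f) differentiable (at x))"

definition wave_speed :: "real \<Rightarrow> real" where
  "wave_speed \<sigma> = sqrt (1 + \<sigma>)"

text \<open>Smooth solution of the travelling-wave Euler--Poisson system with the
  boundary conditions at infinity.  Positivity of the density is required so that
  the term sigma n'/n is meaningful.\<close>
definition is_wave_solution ::
  "real \<Rightarrow> real \<Rightarrow> real \<Rightarrow> (real \<Rightarrow> real) \<Rightarrow> (real \<Rightarrow> real) \<Rightarrow> (real \<Rightarrow> real) \<Rightarrow> bool" where
  "is_wave_solution \<sigma> \<gamma> \<epsilon> n u \<phi> \<longleftrightarrow>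
     smooth_fun n \<and> smooth_fun u \<and> smooth_fun \<phi> \<and> (\<forall>\<xi>. n \<xi> > 0) \<and>
     (\<forall>\<xi>. - (wave_speed \<sigma> + \<gamma> * \<epsilon>) * deriv n \<xi> + deriv (\<lambda>x. n x * u x) \<xi> = 0) \<and>
     (\<forall>\<xi>. - (wave_speed \<sigma> + \<gamma> * \<epsilon>) * deriv u \<xi> + u \<xi> * deriv u \<xi>
            + \<sigma> * deriv n \<xi> / n \<xi> = - deriv \<phi> \<xi>) \<and>
     (\<forall>\<xi>. \<epsilon> * deriv (deriv \<phi>) \<xi> = exp (\<phi> \<xi>) - n \<xi>) \<and>
     (n \<longlongrightarrow> 1) at_top \<and> (n \<longlongrightarrow> 1) at_bot \<and>
     (u \<longlongrightarrow> 0) at_top \<and> (u \<longlongrightarrow> 0) at_bot \<and>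
     (\<phi> \<longlongrightarrow> 0) at_top \<and> (\<phi> \<longlongrightarrow> 0) at_bot"

definition is_solitary_wave ::
  "real \<Rightarrow> real \<Rightarrow> real \<Rightarrow> (real \<Rightarrow> real) \<Rightarrow> (real \<Rightarrow> real) \<Rightarrow> (real \<Rightarrow> real) \<Rightarrow> bool" where
  "is_solitary_wave \<sigma> \<gamma> \<epsilon> n u \<phi> \<longleftrightarrow>
     is_wave_solution \<sigma> \<gamma> \<epsilon> n u \<phi> \<and>
     \<not> (n = (\<lambda>_. 1) \<and> u = (\<lambda>_. 0) \<and> \<phi> = (\<lambda>_. 0)) \<and>
     (\<forall>\<xi>. n (- \<xi>) = n \<xi> \<and> u (- \<xi>) = u \<xi> \<and> \<phi> (- \<xi>) = \<phi> \<xi>) \<and>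
     strict_antimono_on {0<..} n \<and> strict_antimono_on {0<..} u \<and> strict_antimono_on {0<..} \<phi>"

definition n_KdV :: "real \<Rightarrow> real \<Rightarrow> real \<Rightarrow> real" where
  "n_KdV \<sigma> \<gamma> \<xi> = 3 * \<gamma> / wave_speed \<sigma> *
      (1 / cosh (sqrt (wave_speed \<sigma> * \<gamma> / 2) * \<xi>)) ^ 2"

end

theory Submission
  imports Defs
begin
lemma exp_taylor3:
  fixes x :: real assumes "\<bar>x\<bar> \<le> 1"
  shows "\<bar>exp x - 1 - x - x^2/2\<bar> \<le> \<bar>x\<bar>^3"
proof -
  obtain t where t: "\<bar>t\<bar> \<le> \<bar>x\<bar>" "exp x = (\<Sum>m<3. (x ^ m) / fact m) + (exp t / fact 3) * x ^ 3"
    using Maclaurin_exp_le[of x 3] by blast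
  have s: "(\<Sum>m<3. (x ^ m) / fact m) = 1 + x + x^2/2"
    by (simp add: numeral_3_eq_3 power2_eq_square)
  have "exp t \<le> exp 1" using t(1) assms by simp
  also have "exp (1::real) \<le> 6" using exp_le by simp
  finally have et: "exp t \<le> 6" .
  have "\<bar>exp x - 1 - x - x^2/2\<bar> = exp t / 6 * \<bar>x\<bar>^3"
    using t(2) s by (simp add: abs_mult power_abs fact_numeral)
  also have "\<dots> \<le> \<bar>x\<bar>^3" using et using et by (simp add: mult.commute mult_right_mono)
  finally show ?thesis .
qed

lemma ln_taylor3:
  fixes v :: real assumes "0 \<le> v" "v \<le> 1"
  shows "\<bar>ln (1+v) - v + v^2/2\<bar> \<le> v^3"
proof -
  have d1: "DERIV (\<lambda>x. ln (1+x) - x + x^2/2) x :> x^2/(1+x)" if "0 \<le> x" for x::real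
    using that by (auto intro!: derivative_eq_intros simp: field_simps power2_eq_square)
  have "ln (1+0) - 0 + 0^2/2 \<le> ln (1+v) - v + v^2/(2::real)"
    by (rule DERIV_nonneg_imp_nondecreasing[OF assms(1)], intro exI conjI, rule d1, auto)
  hence lo: "0 \<le> ln (1+v) - v + v^2/2" by simp
  have d2: "DERIV (\<lambda>x. x^3 - (ln (1+x) - x + x^2/2)) x :> 3*x^2 - x^2/(1+x)" if "0 \<le> x" for x::real
    using that by (auto intro!: derivative_eq_intros simp: field_simps power2_eq_square)
  have nn: "3*x^2 - x^2/(1+x) \<ge> 0" if "0 \<le> x" for x::real
  proof -
    have "x^2/(1+x) \<le> x^2" using that by (simp add: divide_le_eq mult_le_cancel_left1 power2_eq_square)
    moreover have "x^2 \<le> 3*x^2" by simp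
    ultimately show ?thesis by linarith
  qed
  have "0^3 - (ln (1+0) - 0 + 0^2/2) \<le> v^3 - (ln (1+v) - v + v^2/(2::real))"
    by (rule DERIV_nonneg_imp_nondecreasing[OF assms(1)], intro exI conjI, rule d2, auto, use nn in force)
  hence "ln (1+v) - v + v^2/2 \<le> v^3" by simp
  with lo show ?thesis by simp
qed

lemma rat_taylor3:
  fixes v :: real assumes "0 \<le> v" "v \<le> 1"
  shows "abs ((1 - 1/(1+v)^2) - 2* v + 3* v^2) \<le> 7* v^3"
proof -
  have p: "(1+v)^2 > 0" using assms by simp
  have e: "(1 - 1/(1+v)^2) - 2* v + 3* v^2 = (4* v^3 + 3* v^4)/(1+v)^2"
    using p by (simp add: field_simps) (simp add: algebra_simps power2_eq_square power3_eq_cube power4_eq_xxxx)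
  have "(4* v^3 + 3* v^4)/(1+v)^2 \<le> 4* v^3 + 3* v^4"
    using assms p by (simp add: divide_le_eq) (smt (verit) assms mult_le_cancel_left1 one_le_power zero_le_power)
  also have "\<dots> \<le> 7 * v^3" using assms power_decreasing[of 3 4 v] by simp
  finally show ?thesis using e assms by simp
qed

lemma id_lemma: "\<And>v e d E1 E2 s g p B ::real. p = (1+d)* v - B* v^2 + E1 \<Longrightarrow> B = 3*(1+d)/2 + s \<Longrightarrow> E2 + p + p^2/2 - v - (d - g^2*e^2)*p + (1+s)*p^2
     = E2 + g^2*e^2*p - d^2* v + (d*B - 3*d/2)* v^2 + (1-d)*E1 + (3/2+s)*((p-v)*(p+v))"
  apply hypsubst by (simp add: field_simps power2_eq_square)

lemma abs6: "\<bar>a + b - c + d + e + f\<bar> \<le> \<bar>a\<bar>+\<bar>b\<bar>+\<bar>c\<bar>+\<bar>d\<bar>+\<bar>e\<bar>+\<bar>f::real\<bar>"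
  by linarith

lemma comb6:
  fixes c1 c2 c3 c4 c5 c6 X Y Z :: real
  assumes "0 \<le> c1" "0 \<le> c2" "0 \<le> c3" "0 \<le> c4" "0 \<le> c5" "0 \<le> c6" "0 \<le> X" "0 \<le> Y" "0 \<le> Z"
  shows "c1*Z + c2*X + c3*X + c4*Y + c5*Z + c6*(Y+Z) \<le> (c1+c2+c3+c4+c5+c6)*(X+Y+Z)"
proof -
  have e: "(c1+c2+c3+c4+c5+c6)*(X+Y+Z) - (c1*Z + c2*X + c3*X + c4*Y + c5*Z + c6*(Y+Z))
    = c1*(X+Y) + c2*(Y+Z) + c3*(Y+Z) + c4*(X+Z) + c5*(X+Y) + c6*X" by (simp add: algebra_simps)
  have "0 \<le> c1*(X+Y) + c2*(Y+Z) + c3*(Y+Z) + c4*(X+Z) + c5*(X+Y) + c6*X"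
    using assms by (intro add_nonneg_nonneg mult_nonneg_nonneg) auto
  thus ?thesis using e by linarith
qed

lemma core_bound:
  fixes v e d p E1 E2 B K1 a1 Bm g s :: real
  assumes v: "0 \<le> v" "v \<le> 1" and e: "0 \<le> e" and d: "0 \<le> d" "d \<le> a1 * e" "d \<le> 1"
    and B: "B = 3*(1+d)/2 + s" "B \<le> Bm" and s: "0 \<le> s"
    and E1: "\<bar>E1\<bar> \<le> K1 * v^3" and E2: "\<bar>E2\<bar> \<le> \<bar>p\<bar>^3"
    and p: "p = (1+d)* v - B* v^2 + E1" "0 \<le> p" "p \<le> 2* v" "\<bar>p - v\<bar> \<le> a1*e* v + Bm* v^2 + K1* v^3"
    and a1: "0 \<le> a1" and K10: "0 \<le> K1"
  shows "\<bar>E2 + p + p^2/2 - v - (d - g^2*e^2)*p + (1+s)*p^2\<bar>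
     \<le> (8 + 2*g^2 + a1^2 + a1*(Bm+3/2) + K1 + 3*(3/2+s)*(a1 + Bm + K1)) * (e^2* v + e* v^2 + v^3)"
proof -
  have B0: "0 \<le> B" using B s d by simp
  have id: "E2 + p + p^2/2 - v - (d - g^2*e^2)*p + (1+s)*p^2
     = E2 + g^2*e^2*p - d^2* v + (d*B - 3*d/2)* v^2 + (1-d)*E1 + (3/2+s)*((p-v)*(p+v))"
    by (rule id_lemma[OF p(1) B(1)])
  have t1: "\<bar>E2\<bar> \<le> 8* v^3"
  proof -
    have "\<bar>p\<bar>^3 \<le> (2* v)^3" using p by (intro power_mono) auto
    thus ?thesis using E2 by simp
  qed
  have t2: "\<bar>g^2*e^2*p\<bar> \<le> 2*g^2*(e^2* v)"
  proof -
    have "\<bar>g^2*e^2*p\<bar> = g^2*e^2*p" using p by (simp add: abs_mult)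
    also have "\<dots> \<le> g^2*e^2*(2* v)" using p by (intro mult_left_mono) auto
    finally show ?thesis by simp
  qed
  have t3: "\<bar>d^2* v\<bar> \<le> a1^2*(e^2* v)"
  proof -
    have "d^2 \<le> (a1*e)^2" using d by (intro power_mono) auto
    hence "d^2* v \<le> (a1*e)^2* v" using v by (intro mult_right_mono) auto
    thus ?thesis using v by (simp add: power_mult_distrib)
  qed
  have t4: "\<bar>(d*B - 3*d/2)* v^2\<bar> \<le> a1*(Bm+3/2)*(e* v^2)"
  proof -
    have "\<bar>d*B - 3*d/2\<bar> \<le> d*(B+3/2)" using d B0 by (simp add: abs_le_iff algebra_simps)
    also have "\<dots> \<le> (a1*e)*(Bm+3/2)" using d B B0 by (intro mult_mono) auto
    finally have "\<bar>d*B - 3*d/2\<bar>* v^2 \<le> (a1*e)*(Bm+3/2)* v^2" by (intro mult_right_mono) auto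
    moreover have "\<bar>(d*B - 3*d/2)* v^2\<bar> = \<bar>d*B - 3*d/2\<bar>* v^2" by (simp add: abs_mult)
    ultimately show ?thesis by (simp add: algebra_simps)
  qed
  have t5: "\<bar>(1-d)*E1\<bar> \<le> K1* v^3"
  proof -
    have "\<bar>(1-d)*E1\<bar> = (1-d)*\<bar>E1\<bar>" using d by (simp add: abs_mult)
    also have "\<dots> \<le> 1*\<bar>E1\<bar>" using d by (intro mult_right_mono) auto
    finally show ?thesis using E1 by simp
  qed
  have t6: "\<bar>(3/2+s)*((p-v)*(p+v))\<bar> \<le> 3*(3/2+s)*(a1 + Bm + K1)*(e* v^2 + v^3)"
  proof -
    have v43: "v^4 \<le> v^3" using v power_decreasing[of 3 4 v] by simp
    have pv: "\<bar>p+v\<bar> \<le> 3* v" using p v by simp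
    have "\<bar>(p-v)*(p+v)\<bar> \<le> (a1*e* v + Bm* v^2 + K1* v^3)*(3* v)"
      unfolding abs_mult using p pv by (intro mult_mono) auto
    also have "\<dots> = 3*(a1*(e* v^2) + Bm* v^3 + K1* v^4)" by (simp add: algebra_simps power2_eq_square power3_eq_cube power4_eq_xxxx)
    also have "\<dots> \<le> 3*(a1*(e* v^2) + Bm* v^3 + K1* v^3)" using v43 K10 by (simp add: mult_left_mono)
    also have "\<dots> \<le> 3*((a1 + Bm + K1)*(e* v^2 + v^3))"
      using a1 K10 B B0 e v by (simp add: algebra_simps)
    finally have "\<bar>(p-v)*(p+v)\<bar> \<le> 3*((a1 + Bm + K1)*(e* v^2 + v^3))" .
    hence "(3/2+s)*\<bar>(p-v)*(p+v)\<bar> \<le> (3/2+s)*(3*((a1 + Bm + K1)*(e* v^2 + v^3)))"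
      using s by (intro mult_left_mono) auto
    moreover have "\<bar>(3/2+s)*((p-v)*(p+v))\<bar> = (3/2+s)*\<bar>(p-v)*(p+v)\<bar>"
      using s by (simp add: abs_mult)
    moreover have "(3/2+s)*(3*((a1 + Bm + K1)*(e* v^2 + v^3))) = 3*(3/2+s)*(a1 + Bm + K1)*(e* v^2 + v^3)"
      by (simp only: mult.assoc mult.left_commute)
    ultimately show ?thesis by linarith
  qed
  define X where "X = e^2* v" define Y where "Y = e* v^2" define Z where "Z = v^3"
  have XYZ: "0 \<le> X" "0 \<le> Y" "0 \<le> Z" unfolding X_def Y_def Z_def using v e by auto
  have "\<bar>E2 + p + p^2/2 - v - (d - g^2*e^2)*p + (1+s)*p^2\<bar>
     \<le> \<bar>E2\<bar> + \<bar>g^2*e^2*p\<bar> + \<bar>d^2* v\<bar> + \<bar>(d*B - 3*d/2)* v^2\<bar> + \<bar>(1-d)*E1\<bar> + \<bar>(3/2+s)*((p-v)*(p+v))\<bar>"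
    unfolding id by (rule abs6)
  also have "\<dots> \<le> 8*Z + 2*g^2*X + a1^2*X + a1*(Bm+3/2)*Y + K1*Z + 3*(3/2+s)*(a1 + Bm + K1)*(Y + Z)"
    using t1 t2 t3 t4 t5 t6 unfolding X_def Y_def Z_def by linarith
  also have "\<dots> \<le> (8 + 2*g^2 + a1^2 + a1*(Bm+3/2) + K1 + 3*(3/2+s)*(a1 + Bm + K1)) * (X + Y + Z)"
  proof (rule comb6)
    show "0 \<le> 3*(3/2+s)*(a1 + Bm + K1)" using s a1 K10 B B0 by auto
    show "0 \<le> a1*(Bm+3/2)" using a1 B B0 by auto
  qed (use XYZ K10 in auto)
  finally show ?thesis unfolding X_def Y_def Z_def .
qed

definition hfun :: "real \<Rightarrow> real \<Rightarrow> real \<Rightarrow> real" where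
  "hfun s c n = c^2/2*(1 - 1/n^2) - s*ln n"

lemma rbound:
  fixes s g :: real
  assumes s: "0 \<le> s" and g: "0 < g"
  defines "V \<equiv> sqrt (1+s)"
  obtains K t0 e0 where "K > 0" "t0 > 0" "e0 > 0" "t0 \<le> 1/2" "e0 \<le> 1"
    "\<And>e y. 0 < e \<Longrightarrow> e \<le> e0 \<Longrightarrow> 0 \<le> y \<Longrightarrow> y \<le> t0 \<Longrightarrow>
       y/2 \<le> hfun s (V+g*e) (1+y) \<and> hfun s (V+g*e) (1+y) \<le> 2*y \<and>
       \<bar>exp (hfun s (V+g*e) (1+y)) - 1 - y - 2*V*g*e*hfun s (V+g*e) (1+y) + V^2*(hfun s (V+g*e) (1+y))^2\<bar>
         \<le> K*(e^2*y + e*y^2 + y^3)"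
proof -
  have V0: "V \<ge> 1" unfolding V_def using s by simp
  have V2: "V^2 = 1+s" unfolding V_def using s by simp
  define a1 where "a1 = 2*V*g+g^2"
  define Bm where "Bm = 3*(1+a1)/2 + s"
  define K1 where "K1 = 7*(V+g)^2/2 + s"
  define K where "K = 8 + 2*g^2 + a1^2 + a1*(Bm+3/2) + K1 + 3*(3/2+s)*(a1 + Bm + K1)"
  define t0 where "t0 = min (1/2) (1/(4*(Bm+K1)))"
  define e0 where "e0 = min 1 (1/(4*a1))"
  have a10: "a1 > 0" unfolding a1_def using V0 g by (simp add: add_pos_nonneg)
  have "0 < 3*(1+a1)/2" using a10 by simp
  hence Bm0: "Bm > 0" unfolding Bm_def using s by linarith
  have K10: "K1 \<ge> 0" unfolding K1_def using s by simp
  have K0: "K > 0" unfolding K_def using a10 Bm0 K10 s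
    by (intro add_pos_nonneg) auto
  have t00: "t0 > 0" unfolding t0_def using Bm0 K10 by simp
  have e00: "e0 > 0" unfolding e0_def using a10 by simp
  have main: "y/2 \<le> hfun s (V+g*e) (1+y) \<and> hfun s (V+g*e) (1+y) \<le> 2*y \<and>
       \<bar>exp (hfun s (V+g*e) (1+y)) - 1 - y - 2*V*g*e*hfun s (V+g*e) (1+y) + V^2*(hfun s (V+g*e) (1+y))^2\<bar>
         \<le> K*(e^2*y + e*y^2 + y^3)"
    if e: "0 < e" "e \<le> e0" and y: "0 \<le> y" "y \<le> t0" for e y
  proof -
    have e1: "e \<le> 1" and ea: "e * a1 \<le> 1/4" using e a10 unfolding e0_def by (auto simp: field_simps)
    have v1: "y \<le> 1/2" and vb: "y * (Bm+K1) \<le> 1/4" using y Bm0 K10 unfolding t0_def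
      by (auto simp: field_simps)
    define c where "c = V+g*e"
    define d where "d = c^2 - s - 1"
    define B where "B = 3*(1+d)/2 + s"
    define p where "p = hfun s c (1+y)"
    have c0: "0 < c" "c \<le> V + g" unfolding c_def using V0 g e e1 by (auto intro: add_pos_nonneg)
    have dd: "d = 2*V*g*e + g^2*e^2" unfolding d_def c_def using V2
      by (simp add: power2_eq_square algebra_simps)
    have d0: "0 \<le> d" unfolding dd using V0 g e by simp
    have ee: "e^2 \<le> e" using e e1 by (simp add: power2_eq_square mult_left_le_one_le)
    have da: "d \<le> a1*e" unfolding dd a1_def using ee g e V0
      by (simp add: algebra_simps mult_left_mono)
    have d1: "d \<le> 1/4" using da ea by (simp add: mult.commute)
    have "a1*e \<le> a1" using e1 a10 mult_left_mono[of e 1 a1] by simp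
    hence BB: "B \<le> Bm" unfolding B_def Bm_def using da by (simp add: field_simps)
    obtain p3 where p3: "1 - 1/(1+y)^2 = 2*y - 3*y^2 + p3" "\<bar>p3\<bar> \<le> 7*y^3"
      using rat_taylor3[of y] y v1 by (intro that[of "(1 - 1/(1+y)^2) - 2*y + 3*y^2"]) auto
    obtain l3 where l3: "ln (1+y) = y - y^2/2 + l3" "\<bar>l3\<bar> \<le> y^3"
      using ln_taylor3[of y] y v1 by (intro that[of "ln (1+y) - y + y^2/2"]) auto
    define E1 where "E1 = c^2/2*p3 - s*l3"
    have pe: "p = (1+d)*y - B*y^2 + E1"
      unfolding p_def hfun_def p3(1) l3(1) E1_def B_def d_def by (simp add: field_simps)
    have cc: "c^2 \<le> (V+g)^2" using c0 by (intro power_mono) auto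
    have E1b: "\<bar>E1\<bar> \<le> K1*y^3"
    proof -
      have "\<bar>E1\<bar> \<le> \<bar>c^2/2*p3\<bar> + \<bar>s*l3\<bar>" unfolding E1_def by (rule abs_triangle_ineq4)
      also have "\<dots> = c^2/2*\<bar>p3\<bar> + s*\<bar>l3\<bar>" using s by (simp add: abs_mult)
      also have "\<dots> \<le> (V+g)^2/2*(7*y^3) + s*y^3"
        using cc p3(2) l3(2) s by (intro add_mono mult_mono) auto
      finally show ?thesis unfolding K1_def by (simp add: algebra_simps)
    qed
    have B0: "0 \<le> B" unfolding B_def using d0 s by simp
    have pv: "\<bar>p - y\<bar> \<le> a1*e*y + Bm*y^2 + K1*y^3"
    proof -
      have "\<bar>p - y\<bar> = \<bar>d*y - B*y^2 + E1\<bar>" unfolding pe by (simp add: algebra_simps)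
      also have "\<dots> \<le> \<bar>d*y\<bar> + \<bar>B*y^2\<bar> + \<bar>E1\<bar>" by linarith
      also have "\<dots> = d*y + B*y^2 + \<bar>E1\<bar>" using d0 y B0 by (simp add: abs_mult)
      also have "\<dots> \<le> a1*e*y + Bm*y^2 + K1*y^3"
        using da BB E1b y by (intro add_mono mult_right_mono) auto
      finally show ?thesis .
    qed
    have pv2: "\<bar>p - y\<bar> \<le> y/2"
    proof -
      have "(e*a1)*y \<le> (1/4)*y" using ea y by (intro mult_right_mono) auto
      hence "a1*e*y \<le> y/4" by (simp add: mult.commute)
      moreover have "Bm*y^2 + K1*y^3 \<le> y/4"
      proof -
        have vv: "y^2 = y*y" by (simp add: power2_eq_square)
        have "y^3 = y*(y*y)" by (simp add: power3_eq_cube)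
        also have "\<dots> \<le> 1*(y*y)" using y v1 by (intro mult_right_mono) auto
        finally have "K1*y^3 \<le> K1*(y*y)" using K10 by (intro mult_left_mono) auto
        hence "Bm*y^2 + K1*y^3 \<le> (Bm+K1)*(y*y)" unfolding vv by (simp add: distrib_right)
        also have "\<dots> = (y*(Bm+K1))*y" by (simp add: algebra_simps)
        also have "\<dots> \<le> (1/4)*y" using vb y by (intro mult_right_mono) auto
        finally show ?thesis by simp
      qed
      ultimately show ?thesis using pv by linarith
    qed
    have p0: "0 \<le> p" "p \<le> 2*y" "y/2 \<le> p" using abs_le_D1[OF pv2] abs_le_D2[OF pv2] y by linarith+
    have E2: "\<bar>exp p - 1 - p - p^2/2\<bar> \<le> \<bar>p\<bar>^3" using p0 v1 by (intro exp_taylor3) auto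
    have "\<bar>(exp p - 1 - p - p^2/2) + p + p^2/2 - y - (d - g^2*e^2)*p + (1+s)*p^2\<bar> \<le> K*(e^2*y + e*y^2 + y^3)"
      unfolding K_def
      by (rule core_bound[OF y(1) _ _ d0 da _ B_def BB s E1b E2 pe p0(1) p0(2) pv]) (use v1 e d1 a10 K10 in auto)
    moreover have "(exp p - 1 - p - p^2/2) + p + p^2/2 - y - (d - g^2*e^2)*p + (1+s)*p^2
       = exp p - 1 - y - 2*V*g*e*p + V^2*p^2" unfolding dd V2 by (simp add: algebra_simps)
    ultimately show ?thesis using p0 unfolding p_def c_def by simp
  qed
  show ?thesis
    by (rule that[OF K0 t00 e00 _ _ main]) (auto simp: t0_def e0_def)
qed

lemma cosh_pos': "cosh (x::real) > 0" by (simp add: cosh_real_pos)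

lemma nkdv_facts:
  fixes s g :: real
  assumes s: "0 \<le> s" and g: "0 < g"
  defines "V \<equiv> wave_speed s"
  defines "k \<equiv> sqrt (V * g/2)"
  defines "A \<equiv> 3 * g/V"
  defines "N1 \<equiv> (\<lambda>x. -2 * A * k * sinh (k * x) / (cosh (k * x))^3)"
  shows "\<And>x. (n_KdV s g has_real_derivative N1 x) (at x)"
    and "\<And>x. (N1 has_real_derivative (2 * V * g * n_KdV s g x - V^2 * (n_KdV s g x)^2)) (at x)"
    and "N1 0 = 0" and "n_KdV s g 0 = A" and "\<And>x. 0 \<le> n_KdV s g x" and "\<And>x. n_KdV s g x \<le> A"
proof -
  have V0: "V \<ge> 1" unfolding V_def wave_speed_def using s by simp
  have V2: "V^2 = 1+s" unfolding V_def wave_speed_def using s by simp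
  have k2: "k^2 = V * g/2" unfolding k_def using V0 g by simp
  have k0: "k > 0" unfolding k_def using V0 g by simp
  have nk: "n_KdV s g = (\<lambda>x. A / (cosh (k * x))^2)"
    unfolding n_KdV_def A_def k_def V_def by (simp add: fun_eq_iff power_one_over)
  show "(n_KdV s g has_real_derivative N1 x) (at x)" for x
  proof -
    have c: "cosh (k * x) \<noteq> 0" using cosh_pos'[of "k * x"] by simp
    have "((\<lambda>x. A / (cosh (k * x))^2) has_real_derivative N1 x) (at x)"
      unfolding N1_def
      apply (rule DERIV_cong)
       apply (rule derivative_intros)+
       apply (simp add: c)
      using c by (simp add: power2_eq_square power3_eq_cube field_simps)
    thus ?thesis unfolding nk by simp
  qed
  show "(N1 has_real_derivative (2 * V * g * n_KdV s g x - V^2 * (n_KdV s g x)^2)) (at x)" for x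
  proof -
    have c: "cosh (k * x) > 0" by (rule cosh_pos')
    have sc: "(sinh (k * x))^2 = (cosh (k * x))^2 - 1" by (simp add: cosh_square_eq)
    have "(N1 has_real_derivative
      -2 * A * k * ((k * cosh (k * x)) * (cosh (k * x))^3 - sinh (k * x) * (3 * (cosh (k * x))^2 * (k * sinh (k * x)))) / ((cosh (k * x))^3)^2) (at x)"
      unfolding N1_def
      apply (rule DERIV_cong)
       apply (rule derivative_intros)+
       apply (use c in simp)
      by (simp add: power2_eq_square power3_eq_cube algebra_simps)
    moreover have "-2 * A * k * ((k * cosh (k * x)) * (cosh (k * x))^3 - sinh (k * x) * (3 * (cosh (k * x))^2 * (k * sinh (k * x)))) / ((cosh (k * x))^3)^2
       = 2 * V * g * n_KdV s g x - V^2 * (n_KdV s g x)^2"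
    proof -
      have "-2 * A * k * ((k * cosh (k * x)) * (cosh (k * x))^3 - sinh (k * x) * (3 * (cosh (k * x))^2 * (k * sinh (k * x)))) / ((cosh (k * x))^3)^2
         = -2 * A * k^2 * ((cosh (k * x))^2 - 3 * (sinh (k * x))^2) / (cosh (k * x))^4"
        using c by (simp add: field_simps power2_eq_square power3_eq_cube power4_eq_xxxx)
      also have "\<dots> = 4 * A * k^2 / (cosh (k * x))^2 - 6 * A * k^2/(cosh (k * x))^4"
        unfolding sc using c by (simp add: field_simps power2_eq_square power4_eq_xxxx)
      also have "\<dots> = 2 * V * g * (A / (cosh (k * x))^2) - V^2 * (A / (cosh (k * x))^2)^2"
        unfolding k2 A_def using V0 c by (simp add: field_simps power2_eq_square power4_eq_xxxx)
      finally show ?thesis unfolding nk by simp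
    qed
    ultimately show ?thesis by simp
  qed
  show "N1 0 = 0" unfolding N1_def by simp
  show "n_KdV s g 0 = A" unfolding nk by simp
  have A0: "A > 0" unfolding A_def using g V0 by simp
  show "0 \<le> n_KdV s g x" for x unfolding nk using A0 by simp
  show "n_KdV s g x \<le> A" for x
  proof -
    have "1 \<le> cosh (k * x)" by (rule cosh_real_ge_1)
    hence "1 \<le> (cosh (k * x))^2" by simp
    thus ?thesis unfolding nk using A0 by (simp add: divide_le_eq_1 field_simps) 
  qed
qed

lemma smooth_D:
  assumes "smooth_fun f"
  shows "(f has_real_derivative deriv f x) (at x)" "(deriv f has_real_derivative deriv (deriv f) x) (at x)"
proof -
  have "((deriv ^^ 0) f) differentiable (at x)" "((deriv ^^ 1) f) differentiable (at x)"
    using assms unfolding smooth_fun_def by blast+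
  hence "f differentiable (at x)" "deriv f differentiable (at x)" by simp_all
  thus "(f has_real_derivative deriv f x) (at x)" "(deriv f has_real_derivative deriv (deriv f) x) (at x)"
    by (simp_all add: DERIV_deriv_iff_real_differentiable)
qed

lemma const_from_deriv0:
  fixes F :: "real \<Rightarrow> real"
  assumes "\<And>x. (F has_real_derivative 0) (at x)" "(F \<longlongrightarrow> L) at_top"
  shows "F x = L"
proof -
  have c: "F y = F x" for y using DERIV_isconst_all[of F y x] assms(1) by blast
  have "(F \<longlongrightarrow> F x) at_top"
    by (rule Lim_transform_eventually[OF tendsto_const], rule always_eventually, metis c)
  from tendsto_unique[OF _ this assms(2)] show ?thesis by simp
qed

lemma antimono_ext:
  fixes f :: "real \<Rightarrow> real"
  assumes sm: "strict_antimono_on {0<..} f" and ct: "isCont f 0"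
    and xy: "0 \<le> x" "x \<le> y"
  shows "f y \<le> f x"
proof (cases "x = y")
  case True thus ?thesis by simp
next
  case False
  hence lt: "x < y" using xy by simp
  show ?thesis
  proof (cases "x = 0")
    case False
    hence "f y < f x" using sm lt xy unfolding monotone_on_def by auto
    thus ?thesis by simp
  next
    case True
    have "(f \<longlongrightarrow> f 0) (at_right 0)"
      using ct unfolding isCont_def by (rule tendsto_mono[OF at_le, rotated]) simp
    moreover have "eventually (\<lambda>t. f y \<le> f t) (at_right 0)"
    proof -
      have "eventually (\<lambda>t. t \<in> {0<..<y}) (at_right (0::real))"
        using lt True by (intro eventually_at_right_real) simp
      thus ?thesis
      proof (rule eventually_mono)
        fix t assume "t \<in> {0<..<y}"
        hence "f y < f t" using sm lt unfolding monotone_on_def by auto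
        thus "f y \<le> f t" by simp
      qed
    qed
    ultimately have "f y \<le> f 0" by (rule tendsto_lowerbound) simp
    thus ?thesis using True by simp
  qed
qed

lemma sol_props:
  fixes s g e :: real and n u p :: "real \<Rightarrow> real"
  assumes s: "0 \<le> s" and g: "0 < g" and e: "0 < e" and sw: "is_solitary_wave s g e n u p"
  defines "c \<equiv> wave_speed s + g * e"
  shows "\<And>x. (p has_real_derivative deriv p x) (at x)"
    and "\<And>x. (deriv p has_real_derivative deriv (deriv p) x) (at x)"
    and "\<And>x. e * deriv (deriv p) x = exp (p x) - n x"
    and "\<And>x. p x = hfun s c (n x)"
    and "\<And>x. 0 \<le> x \<Longrightarrow> 1 \<le> n x"
    and "\<And>x y. 0 \<le> x \<Longrightarrow> x \<le> y \<Longrightarrow> p y \<le> p x"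
    and "\<And>x y. 0 \<le> x \<Longrightarrow> x \<le> y \<Longrightarrow> n y \<le> n x"
    and "\<And>x. 0 \<le> x \<Longrightarrow> deriv p x \<le> 0"
    and "deriv p 0 = 0"
    and "(p \<longlongrightarrow> 0) at_top" and "(n \<longlongrightarrow> 1) at_top"
    and "\<And>x. isCont n x" and "\<And>x. isCont p x"
    and "\<And>B d. 0 < d \<Longrightarrow> \<exists>t\<ge>B. \<bar>deriv p t\<bar> < d"
    and "\<And>x. 0 \<le> x \<Longrightarrow> 0 \<le> p x"
proof -
  have ws: "is_wave_solution s g e n u p" using sw unfolding is_solitary_wave_def by simp
  note W = ws[unfolded is_wave_solution_def]
  have smn: "smooth_fun n" and smu: "smooth_fun u" and smp: "smooth_fun p" using W by auto
  have npos: "\<And>x. n x > 0" using W by auto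
  have eq1: "\<And>x. - c * deriv n x + deriv (\<lambda>x. n x * u x) x = 0" using W unfolding c_def by auto
  have eq2: "\<And>x. - c * deriv u x + u x * deriv u x + s * deriv n x / n x = - deriv p x"
    using W unfolding c_def by auto
  have eq3: "\<And>x. e * deriv (deriv p) x = exp (p x) - n x" using W by auto
  have lims: "(n \<longlongrightarrow> 1) at_top" "(u \<longlongrightarrow> 0) at_top" "(p \<longlongrightarrow> 0) at_top" using W by auto
  have dn: "\<And>x. (n has_real_derivative deriv n x) (at x)" using smooth_D[OF smn] by blast
  have du: "\<And>x. (u has_real_derivative deriv u x) (at x)" using smooth_D[OF smu] by blast
  have dp: "\<And>x. (p has_real_derivative deriv p x) (at x)" using smooth_D[OF smp] by blast
  have ddp: "\<And>x. (deriv p has_real_derivative deriv (deriv p) x) (at x)" using smooth_D[OF smp] by blast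
  show "(p has_real_derivative deriv p x) (at x)" for x by (rule dp)
  show "(deriv p has_real_derivative deriv (deriv p) x) (at x)" for x by (rule ddp)
  show "e * deriv (deriv p) x = exp (p x) - n x" for x by (rule eq3)
  have dnu: "deriv (\<lambda>x. n x * u x) x = deriv n x * u x + n x * deriv u x" for x
    by (rule DERIV_imp_deriv) (auto intro!: derivative_eq_intros dn du)
  have mass: "n x * (u x - c) = - c" for x
  proof (rule const_from_deriv0[where F = "\<lambda>x. n x * (u x - c)"])
    show "((\<lambda>x. n x * (u x - c)) has_real_derivative 0) (at x)" for x
      apply (rule DERIV_cong)
       apply (rule derivative_intros dn du)+
      using eq1[of x] unfolding dnu by (simp add: algebra_simps)
    show "((\<lambda>x. n x * (u x - c)) \<longlongrightarrow> - c) at_top"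
      using tendsto_mult[OF lims(1) tendsto_diff[OF lims(2) tendsto_const[of c]]] by simp
  qed
  have dln: "((\<lambda>z. s * ln (n z)) has_real_derivative s * (1 / n x * deriv n x)) (at x)" for x
    by (rule DERIV_cmult[OF DERIV_chain2[OF DERIV_ln_divide[OF npos[of x]] dn[of x]]])
  have mom: "(- c) * u x + (1/2) * (u x * u x) + s * ln (n x) + p x = 0" for x
  proof (rule const_from_deriv0[where F = "\<lambda>x. (- c) * u x + (1/2) * (u x * u x) + s * ln (n x) + p x"])
    show "((\<lambda>x. (- c) * u x + (1/2) * (u x * u x) + s * ln (n x) + p x) has_real_derivative 0) (at x)" for x
    proof (rule DERIV_cong)
      show "((\<lambda>x. (- c) * u x + (1/2) * (u x * u x) + s * ln (n x) + p x) has_real_derivative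
        ((- c) * deriv u x + (1/2) * (deriv u x * u x + deriv u x * u x) + s * (1 / n x * deriv n x) + deriv p x)) (at x)"
        by (rule DERIV_add[OF DERIV_add[OF DERIV_add[OF DERIV_cmult[OF du] DERIV_cmult[OF DERIV_mult[OF du du]]] dln] dp])
      show "(- c) * deriv u x + (1/2) * (deriv u x * u x + deriv u x * u x) + s * (1 / n x * deriv n x) + deriv p x = 0"
        using eq2[of x] npos[of x] by (simp add: field_simps)
    qed
    have "((\<lambda>x. (- c) * u x + (1/2) * (u x * u x) + s * ln (n x) + p x) \<longlongrightarrow> (- c) * 0 + (1/2) * (0 * 0) + s * ln 1 + 0) at_top"
      by (intro tendsto_intros lims) simp
    thus "((\<lambda>x. (- c) * u x + (1/2) * (u x * u x) + s * ln (n x) + p x) \<longlongrightarrow> 0) at_top" by simp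
  qed
  show "p x = hfun s c (n x)" for x
  proof -
    have nx: "n x \<noteq> 0" using npos[of x] by simp
    have ux: "u x = c - c / n x" using mass[of x] nx by (simp add: field_simps)
    have "p x = c * u x - (u x)^2/2 - s * ln (n x)" using mom[of x] by (simp add: power2_eq_square)
    also have "\<dots> = hfun s c (n x)" unfolding ux hfun_def using nx
      by (simp add: field_simps power2_eq_square)
    finally show ?thesis .
  qed
  have ctn: "\<And>x. isCont n x" using dn by (rule DERIV_isCont)
  have ctp: "\<And>x. isCont p x" using dp by (rule DERIV_isCont)
  show "isCont n x" for x by (rule ctn)
  show "isCont p x" for x by (rule ctp)
  have smon: "strict_antimono_on {0<..} n" and smop: "strict_antimono_on {0<..} p"
    using sw unfolding is_solitary_wave_def by auto
  show pmono: "\<And>x y. 0 \<le> x \<Longrightarrow> x \<le> y \<Longrightarrow> p y \<le> p x"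
    by (rule antimono_ext[OF smop ctp])
  show nmono: "\<And>x y. 0 \<le> x \<Longrightarrow> x \<le> y \<Longrightarrow> n y \<le> n x"
    by (rule antimono_ext[OF smon ctn])
  show "(p \<longlongrightarrow> 0) at_top" "(n \<longlongrightarrow> 1) at_top" using lims by auto
  show "1 \<le> n x" if "0 \<le> x" for x
  proof (rule tendsto_upperbound[OF lims(1)])
    show "eventually (\<lambda>y. n y \<le> n x) at_top"
      using that nmono unfolding eventually_at_top_linorder by blast
  qed simp
  show "0 \<le> p x" if "0 \<le> x" for x
  proof (rule tendsto_upperbound[OF lims(3)])
    show "eventually (\<lambda>y. p y \<le> p x) at_top"
      using that pmono unfolding eventually_at_top_linorder by blast
  qed simp
  show "deriv p x \<le> 0" if "0 \<le> x" for x
  proof (rule ccontr)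
    assume "\<not> deriv p x \<le> 0"
    then obtain d where d: "d > 0" "\<forall>h>0. h < d \<longrightarrow> p x < p (x + h)"
      using DERIV_pos_inc_right[OF dp[of x]] by auto
    have "p x < p (x + d/2)" using d by auto
    moreover have "p (x + d/2) \<le> p x" using pmono[of x "x + d/2"] that d by simp
    ultimately show False by simp
  qed
  show "deriv p 0 = 0"
  proof (rule DERIV_local_max[OF dp[of 0], of 1])
    have ev: "p (- y) = p y" for y using sw unfolding is_solitary_wave_def by auto
    show "\<forall>y. \<bar>0 - y\<bar> < 1 \<longrightarrow> p y \<le> p 0"
    proof (intro allI impI)
      fix y :: real
      show "p y \<le> p 0"
      proof (cases "0 \<le> y")
        case True thus ?thesis using pmono[of 0 y] by simp
      next
        case False thus ?thesis using pmono[of 0 "-y"] ev[of y] by simp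
      qed
    qed
  qed simp
  show "\<exists>t\<ge>B. \<bar>deriv p t\<bar> < d" if d: "0 < d" for B d
  proof -
    have "eventually (\<lambda>x. \<bar>p x\<bar> < d/2) at_top"
      using tendstoD[OF lims(3), of "d/2"] d by (simp add: dist_real_def)
    then obtain B0 where B0: "\<And>x. x \<ge> B0 \<Longrightarrow> \<bar>p x\<bar> < d/2" unfolding eventually_at_top_linorder by blast
    define a where "a = max B B0"
    obtain z where z: "a < z" "z < a + 1" "p (a+1) - p a = (a + 1 - a) * deriv p z"
      using MVT2[of a "a+1" p "deriv p"] dp by auto
    have "\<bar>p (a+1)\<bar> < d/2" "\<bar>p a\<bar> < d/2" using B0 unfolding a_def by auto
    hence "\<bar>deriv p z\<bar> < d" using z(3) by simp
    moreover have "z \<ge> B" using z(1) unfolding a_def by simp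
    ultimately show ?thesis by blast
  qed
qed

definition Wf :: "real \<Rightarrow> real \<Rightarrow> real \<Rightarrow> real \<Rightarrow> real \<Rightarrow> real" where
  "Wf e V g q q1 = e * (q1 * q1) / 2 - V * g * e * (q * q) + V^2 * (q * q * q) / 3"

lemma W_small:
  fixes e V g Kp q q1 M d :: real
  assumes "0 < e" "0 \<le> q" "q \<le> 1" "\<bar>q1\<bar> \<le> 1" "0 \<le> V" "0 \<le> g" "0 \<le> Kp"
    and M: "M = e/2 + V * g * e + V^2/3 + Kp * e^2/2 + 1"
    and sm: "\<bar>q1\<bar> < d / (2 * M)" "q < d / (2 * M)"
  shows "\<bar>Wf e V g q q1 + Kp * e^2 * (q * q)/2\<bar> < d" "\<bar>Wf e V g q q1 - Kp * e^2 * (q * q)/2\<bar> < d"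
proof -
  have M1: "M \<ge> 1" using assms by (simp add: M)
  have a1: "\<bar>e * (q1 * q1) / 2\<bar> \<le> e/2 * \<bar>q1\<bar>"
  proof -
    have "\<bar>q1 * q1\<bar> \<le> \<bar>q1\<bar> * 1" unfolding abs_mult using assms by (intro mult_left_mono) auto
    thus ?thesis using assms by (simp add: abs_mult)
  qed
  have qq: "q * q \<le> q" "q * q * q \<le> q" using assms
    by (simp_all add: mult_left_le_one_le mult_le_one)
  have a2: "\<bar>V * g * e * (q * q)\<bar> \<le> V * g * e * q" using assms qq by (simp add: abs_mult mult_left_mono)
  have a3: "\<bar>V^2 * (q * q * q) / 3\<bar> \<le> V^2/3 * q" using assms qq by (simp add: abs_mult mult_left_mono)
  have a4: "\<bar>Kp * e^2 * (q * q)/2\<bar> \<le> Kp * e^2/2 * q" using assms qq by (simp add: abs_mult mult_left_mono)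
  have b: "e/2 * \<bar>q1\<bar> + V * g * e * q + V^2/3 * q + Kp * e^2/2 * q \<le> M * (\<bar>q1\<bar> + q)"
  proof -
    have "M * (\<bar>q1\<bar> + q) - (e/2 * \<bar>q1\<bar> + V * g * e * q + V^2/3 * q + Kp * e^2/2 * q)
      = \<bar>q1\<bar> + q + V * g * e * \<bar>q1\<bar> + e/2 * q + V^2/3 * \<bar>q1\<bar> + Kp * e^2/2 * \<bar>q1\<bar>"
      unfolding M by (simp add: field_simps)
    moreover have "0 \<le> \<bar>q1\<bar> + q + V * g * e * \<bar>q1\<bar> + e/2 * q + V^2/3 * \<bar>q1\<bar> + Kp * e^2/2 * \<bar>q1\<bar>"
      using assms by (intro add_nonneg_nonneg mult_nonneg_nonneg) auto
    ultimately show ?thesis by linarith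
  qed
  have c: "M * (\<bar>q1\<bar> + q) < d"
  proof -
    have "\<bar>q1\<bar> + q < d / M" using sm M1 by (simp add: field_simps)
    thus ?thesis using M1 by (simp add: field_simps)
  qed
  show "\<bar>Wf e V g q q1 + Kp * e^2 * (q * q)/2\<bar> < d" "\<bar>Wf e V g q q1 - Kp * e^2 * (q * q)/2\<bar> < d"
    unfolding Wf_def using a1 a2 a3 a4 b c by linarith+
qed

lemma W_bound:
  fixes p p1 p2 n :: "real \<Rightarrow> real" and e V g Kp x0 :: real
  assumes dp: "\<And>x. (p has_real_derivative p1 x) (at x)"
      and dp1: "\<And>x. (p1 has_real_derivative p2 x) (at x)"
      and pois: "\<And>x. e * p2 x = exp (p x) - n x"
      and p1neg: "\<And>x. 0 \<le> x \<Longrightarrow> p1 x \<le> 0"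
      and pnn: "\<And>x. 0 \<le> x \<Longrightarrow> 0 \<le> p x"
      and plim: "(p \<longlongrightarrow> 0) at_top"
      and smallder: "\<And>B d. 0 < d \<Longrightarrow> \<exists>t\<ge>B. \<bar>p1 t\<bar> < d"
      and rb: "\<And>x. x0 \<le> x \<Longrightarrow> \<bar>exp (p x) - n x - 2 * V * g * e * p x + V^2 * (p x)^2\<bar> \<le> Kp * e^2 * p x"
      and x0: "0 \<le> x0" and e: "0 < e" and V: "0 \<le> V" and g: "0 \<le> g" and Kp: "0 \<le> Kp"
  shows "\<And>x. x0 \<le> x \<Longrightarrow> \<bar>Wf e V g (p x) (p1 x)\<bar> \<le> Kp * e^2 * (p x * p x)/2"
proof -
  define R where "R x = exp (p x) - n x - 2 * V * g * e * p x + V^2 * (p x)^2" for x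
  have R2: "R x = e * p2 x - 2 * V * g * e * p x + V^2 * (p x)^2" for x unfolding R_def pois by simp
  have dW: "((\<lambda>x. Wf e V g (p x) (p1 x)) has_real_derivative p1 x * R x) (at x)" for x
    unfolding Wf_def R2
    apply (rule DERIV_cong)
     apply (rule DERIV_add[OF DERIV_diff[OF DERIV_cdivide[OF DERIV_cmult[OF DERIV_mult[OF dp1 dp1]]]
         DERIV_cmult[OF DERIV_mult[OF dp dp]]] DERIV_cdivide[OF DERIV_cmult[OF DERIV_mult[OF DERIV_mult[OF dp dp] dp]]]])
    by (simp add: field_simps power2_eq_square)
  have dQ: "((\<lambda>x. Kp * e^2 * (p x * p x)/2) has_real_derivative p1 x * (Kp * e^2 * p x)) (at x)" for x
    apply (rule DERIV_cong)
     apply (rule DERIV_cdivide[OF DERIV_cmult[OF DERIV_mult[OF dp dp]]])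
    by (simp add: field_simps)
  define Wp where "Wp x = Wf e V g (p x) (p1 x) + Kp * e^2 * (p x * p x)/2" for x
  define Wm where "Wm x = Wf e V g (p x) (p1 x) - Kp * e^2 * (p x * p x)/2" for x
  have dWp: "(Wp has_real_derivative p1 x * (R x + Kp * e^2 * p x)) (at x)" for x
    unfolding Wp_def[abs_def] using DERIV_add[OF dW dQ, of x] by (simp add: algebra_simps)
  have dWm: "(Wm has_real_derivative p1 x * (R x - Kp * e^2 * p x)) (at x)" for x
    unfolding Wm_def[abs_def] using DERIV_diff[OF dW dQ, of x] by (simp add: algebra_simps)
  have Wp_dec: "Wp y \<le> Wp x" if "x0 \<le> x" "x \<le> y" for x y
  proof (rule DERIV_nonpos_imp_nonincreasing[OF that(2)])
    fix t assume t: "x \<le> t" "t \<le> y"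
    have "0 \<le> R t + Kp * e^2 * p t" using rb[of t] t that unfolding R_def by (simp add: abs_le_iff)
    moreover have "p1 t \<le> 0" using p1neg[of t] t that x0 by simp
    ultimately show "\<exists>D. (Wp has_real_derivative D) (at t) \<and> D \<le> 0"
      using dWp[of t] by (intro exI[of _ "p1 t * (R t + Kp * e^2 * p t)"]) (simp add: mult_nonpos_nonneg)
  qed
  have Wm_inc: "Wm x \<le> Wm y" if "x0 \<le> x" "x \<le> y" for x y
  proof (rule DERIV_nonneg_imp_nondecreasing[OF that(2)])
    fix t assume t: "x \<le> t" "t \<le> y"
    have "R t - Kp * e^2 * p t \<le> 0" using rb[of t] t that unfolding R_def by (simp add: abs_le_iff)
    moreover have "p1 t \<le> 0" using p1neg[of t] t that x0 by simp
    ultimately show "\<exists>D. (Wm has_real_derivative D) (at t) \<and> 0 \<le> D"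
      using dWm[of t] by (intro exI[of _ "p1 t * (R t - Kp * e^2 * p t)"]) (simp add: mult_nonpos_nonpos)
  qed
  fix x assume x: "x0 \<le> x"
  define M where "M = e/2 + V * g * e + V^2/3 + Kp * e^2/2 + 1"
  have M1: "M \<ge> 1" unfolding M_def using e V g Kp by simp
  have key: "- Wp x < d \<and> Wm x < d" if d: "0 < d" for d
  proof -
    define h where "h = min 1 (d / (2 * M))"
    have h0: "h > 0" unfolding h_def using d M1 by simp
    obtain B where B: "\<And>y. y \<ge> B \<Longrightarrow> \<bar>p y\<bar> < h"
      using tendstoD[OF plim h0] unfolding eventually_at_top_linorder dist_real_def by auto
    obtain t where t: "t \<ge> max x B" "\<bar>p1 t\<bar> < h" using smallder[OF h0] by blast
    have pt: "0 \<le> p t" "p t < h" using pnn[of t] B[of t] t x x0 by auto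
    have sm: "\<bar>Wp t\<bar> < d" "\<bar>Wm t\<bar> < d" unfolding Wp_def Wm_def
      using W_small[OF e pt(1) _ _ V g Kp M_def, of "p1 t" d] pt t h_def by auto
    have "Wp t \<le> Wp x" "Wm x \<le> Wm t" using Wp_dec[of x t] Wm_inc[of x t] x t by auto
    thus ?thesis using sm by auto
  qed
  have "- Wp x \<le> 0" by (rule field_le_epsilon) (use key in force)
  moreover have "Wm x \<le> 0" by (rule field_le_epsilon) (use key in force)
  ultimately show "\<bar>Wf e V g (p x) (p1 x)\<bar> \<le> Kp * e^2 * (p x * p x)/2"
    unfolding Wp_def Wm_def by (simp add: abs_le_iff)
qed

lemma gronwall_D:
  fixes D D1 D2 :: "real \<Rightarrow> real" and L b :: real
  assumes dD: "\<And>x. (D has_real_derivative D1 x) (at x)"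
      and dD1: "\<And>x. (D1 has_real_derivative D2 x) (at x)"
      and bd: "\<And>x. 0 \<le> x \<Longrightarrow> \<bar>D2 x\<bar> \<le> L * \<bar>D x\<bar> + b"
      and L: "0 \<le> L" and b: "0 \<le> b"
  shows "\<And>x. 0 \<le> x \<Longrightarrow> D x * D x + D1 x * D1 x \<le> (D 0 * D 0 + D1 0 * D1 0 + b * b) * exp ((2 + L) * x)"
proof -
  define lam where "lam = 2 + L"
  have lam: "lam \<ge> 2" unfolding lam_def using L by simp
  define E where "E x = D x * D x + D1 x * D1 x" for x
  define F where "F x = (E x + b * b / lam) * exp (- lam * x)" for x
  have dE: "(E has_real_derivative (2 * D x * D1 x + 2 * D1 x * D2 x)) (at x)" for x
    unfolding E_def[abs_def]
    apply (rule DERIV_cong)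
     apply (rule DERIV_add[OF DERIV_mult[OF dD dD] DERIV_mult[OF dD1 dD1]])
    by (simp add: algebra_simps)
  have Eineq: "2 * D x * D1 x + 2 * D1 x * D2 x \<le> lam * E x + b * b" if x: "0 \<le> x" for x
  proof -
    have i1: "2 * D x * D1 x \<le> D x * D x + D1 x * D1 x"
      using sum_squares_ge_zero[of "D x - D1 x" 0] by (simp add: algebra_simps power2_eq_square)
    have "2 * D1 x * D2 x \<le> 2 * \<bar>D1 x\<bar> * \<bar>D2 x\<bar>" by (simp add: abs_mult[symmetric] mult.assoc)
    also have "\<dots> \<le> 2 * \<bar>D1 x\<bar> * (L * \<bar>D x\<bar> + b)" using bd[OF x] by (simp add: mult_left_mono)
    also have "\<dots> = L * (2 * \<bar>D x\<bar> * \<bar>D1 x\<bar>) + 2 * \<bar>D1 x\<bar> * b" by (simp add: algebra_simps)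
    also have "\<dots> \<le> L * (D x * D x + D1 x * D1 x) + (D1 x * D1 x + b * b)"
    proof (rule add_mono)
      have "2 * \<bar>D x\<bar> * \<bar>D1 x\<bar> \<le> D x * D x + D1 x * D1 x"
        using zero_le_square[of "\<bar>D x\<bar> - \<bar>D1 x\<bar>"] by (simp add: algebra_simps power2_eq_square abs_mult_self_eq)
      thus "L * (2 * \<bar>D x\<bar> * \<bar>D1 x\<bar>) \<le> L * (D x * D x + D1 x * D1 x)" using L by (rule mult_left_mono)
      show "2 * \<bar>D1 x\<bar> * b \<le> D1 x * D1 x + b * b"
        using zero_le_square[of "\<bar>D1 x\<bar> - b"] b by (simp add: algebra_simps power2_eq_square abs_mult_self_eq)
    qed
    finally have i2: "2 * D1 x * D2 x \<le> L * (D x * D x + D1 x * D1 x) + (D1 x * D1 x + b * b)" .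
    have "0 \<le> D x * D x" by simp
    moreover have "(2 + L) * (D x * D x + D1 x * D1 x) = 2 * (D x * D x) + 2 * (D1 x * D1 x) + L * (D x * D x + D1 x * D1 x)"
      by (simp add: algebra_simps)
    ultimately show ?thesis using i1 i2 unfolding E_def lam_def by linarith
  qed
  have dF: "(F has_real_derivative ((2 * D x * D1 x + 2 * D1 x * D2 x) - lam * (E x + b * b / lam)) * exp (- lam * x)) (at x)" for x
    unfolding F_def[abs_def]
    apply (rule DERIV_cong)
     apply (rule DERIV_mult[OF DERIV_add[OF dE DERIV_const] DERIV_chain2[OF DERIV_exp DERIV_cmult[OF DERIV_ident]]])
    by (simp add: algebra_simps)
  fix x :: real assume x: "0 \<le> x"
  have "F x \<le> F 0"
  proof (rule DERIV_nonpos_imp_nonincreasing[OF x])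
    fix t assume t: "0 \<le> t" "t \<le> x"
    have "(2 * D t * D1 t + 2 * D1 t * D2 t) - lam * (E t + b * b / lam) \<le> 0"
      using Eineq[of t] t lam by (simp add: algebra_simps)
    hence "((2 * D t * D1 t + 2 * D1 t * D2 t) - lam * (E t + b * b / lam)) * exp (- lam * t) \<le> 0"
      by (simp add: mult_nonpos_nonneg)
    thus "\<exists>y. (F has_real_derivative y) (at t) \<and> y \<le> 0" using dF by blast
  qed
  hence "(E x + b * b / lam) * exp (- lam * x) \<le> E 0 + b * b / lam" unfolding F_def by simp
  hence "E x + b * b / lam \<le> (E 0 + b * b / lam) * exp (lam * x)"
    by (simp add: exp_minus field_simps)
  moreover have "b * b / lam \<le> b * b" using lam by (simp add: divide_le_eq) (smt (verit) mult_nonneg_nonneg b mult_le_cancel_left1)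
  moreover have "0 \<le> b * b / lam" using lam by simp
  moreover have "1 \<le> exp (lam * x)" using lam x by simp
  ultimately have "E x \<le> (E 0 + b * b) * exp (lam * x)"
    by (smt (verit) mult_right_mono exp_ge_zero E_def zero_le_square add_nonneg_nonneg)
  thus "D x * D x + D1 x * D1 x \<le> (D 0 * D 0 + D1 0 * D1 0 + b * b) * exp ((2 + L) * x)"
    unfolding E_def lam_def .
qed

lemma nkdv_ex:
  fixes s g :: real
  assumes s: "0 \<le> s" and g: "0 < g"
  obtains N1 where "\<And>x. (n_KdV s g has_real_derivative N1 x) (at x)"
    "\<And>x. (N1 has_real_derivative (2 * wave_speed s * g * n_KdV s g x - (wave_speed s)^2 * (n_KdV s g x)^2)) (at x)"
    "N1 0 = 0" "n_KdV s g 0 = 3 * g / wave_speed s" "\<And>x. 0 \<le> n_KdV s g x" "\<And>x. n_KdV s g x \<le> 3 * g / wave_speed s"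
  by (rule that[OF nkdv_facts(1)[OF s g] nkdv_facts(2)[OF s g] nkdv_facts(3)[OF s g] nkdv_facts(4)[OF s g] nkdv_facts(5)[OF s g] nkdv_facts(6)[OF s g]])

lemma poly_ineq:
  fixes v p a e :: real
  assumes "0 \<le> v" "v \<le> 2 * p" "p \<le> a * e" "0 < e" "0 \<le> a"
  shows "e^2 * v + e * v^2 + v^3 \<le> 8 * (1 + a + a^2) * e^2 * p"
proof -
  have p0: "0 \<le> p" using assms by simp
  have t1: "e^2 * v \<le> 2 * (e^2 * p)" using assms by (simp add: mult_left_mono)
  have "v^2 \<le> (2 * p)^2" using assms by (intro power_mono) auto
  hence "e * v^2 \<le> e * (4 * (p * p))" using assms by (intro mult_left_mono) (auto simp: power2_eq_square)
  also have "\<dots> = 4 * e * p * p" by simp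
  also have "\<dots> \<le> 4 * e * p * (a * e)" using assms p0 by (intro mult_left_mono) auto
  finally have t2: "e * v^2 \<le> 4 * a * (e^2 * p)" by (simp add: power2_eq_square algebra_simps)
  have "v^3 \<le> (2 * p)^3" using assms by (intro power_mono) auto
  also have "\<dots> = 8 * (p * p) * p" by (simp add: power3_eq_cube)
  also have "\<dots> \<le> 8 * ((a * e) * (a * e)) * p" using assms p0 by (intro mult_right_mono mult_left_mono mult_mono) auto
  finally have t3: "v^3 \<le> 8 * a^2 * (e^2 * p)" by (simp add: power2_eq_square algebra_simps)
  have "0 \<le> e^2 * p" "0 \<le> a * (e^2 * p)" "0 \<le> a^2 * (e^2 * p)" using assms p0 by auto
  hence "2 * (e^2 * p) + 4 * a * (e^2 * p) + 8 * a^2 * (e^2 * p) \<le> 8 * (1 + a + a^2) * e^2 * p"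
    by (simp add: algebra_simps)
  thus ?thesis using t1 t2 t3 by linarith
qed

lemma per_sol:
  fixes s g e K t0 e0 :: real and n u p :: "real \<Rightarrow> real"
  defines "V \<equiv> wave_speed s" and "a \<equiv> 6 * g/wave_speed s" and "Kp \<equiv> 8 * K * (1 + 6 * g/wave_speed s + (6 * g/wave_speed s)^2)"
  assumes s: "0 \<le> s" and g: "0 < g" and e: "0 < e" and sw: "is_solitary_wave s g e n u p"
    and rb: "\<And>ee v. 0 < ee \<Longrightarrow> ee \<le> e0 \<Longrightarrow> 0 \<le> v \<Longrightarrow> v \<le> t0 \<Longrightarrow>
       v/2 \<le> hfun s (V+g * ee) (1+v) \<and> hfun s (V+g * ee) (1+v) \<le> 2 * v \<and>
       \<bar>exp (hfun s (V+g * ee) (1+v)) - 1 - v - 2 * V * g * ee * hfun s (V+g * ee) (1+v) + V^2 * (hfun s (V+g * ee) (1+v))^2\<bar>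
         \<le> K * (ee^2 * v + ee * v^2 + v^3)"
    and K: "0 < K" and t0: "0 < t0" and ee0: "e \<le> e0"
    and small1: "a * e < t0/2"
    and small2: "Kp * e / 2 < V * g"
  shows "\<And>x. 0 \<le> x \<Longrightarrow> \<bar>deriv (\<lambda>x. p x - e * n_KdV s g x) x\<bar>^2 + \<bar>p x - e * n_KdV s g x\<bar>^2
     \<le> ((3 * Kp/(2 * V^2))^2 + (Kp * a)^2) * exp ((2 + (2 * V * g + 2 * a * V^2)) * x) * e^4"
proof -
  have V1: "V \<ge> 1" unfolding V_def wave_speed_def using s by simp
  have V2: "V^2 = 1+s" unfolding V_def wave_speed_def using s by simp
  have a0: "a > 0" unfolding a_def using g V1 V_def by simp
  have Kp0: "Kp > 0" unfolding Kp_def using K g V1 V_def by (simp add: add_pos_nonneg)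
  define c where "c = V + g * e"
  note SP = sol_props[OF s g e sw, folded V_def, folded c_def]
  define p1 where "p1 = deriv p"
  define p2 where "p2 = deriv p1"
  have dp: "\<And>x. (p has_real_derivative p1 x) (at x)" using SP(1) unfolding p1_def .
  have dp1: "\<And>x. (p1 has_real_derivative p2 x) (at x)" using SP(2) unfolding p1_def p2_def .
  have pois: "\<And>x. e * p2 x = exp (p x) - n x" using SP(3) unfolding p1_def p2_def .
  have hrel: "\<And>x. p x = hfun s c (n x)" using SP(4) .
  have n1: "\<And>x. 0 \<le> x \<Longrightarrow> 1 \<le> n x" using SP(5) .
  have pmono: "\<And>x y. 0 \<le> x \<Longrightarrow> x \<le> y \<Longrightarrow> p y \<le> p x" using SP(6) .
  have p1neg: "\<And>x. 0 \<le> x \<Longrightarrow> p1 x \<le> 0" using SP(8) unfolding p1_def .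
  have p10: "p1 0 = 0" using SP(9) unfolding p1_def .
  have plim: "(p \<longlongrightarrow> 0) at_top" and nlim: "(n \<longlongrightarrow> 1) at_top" using SP(10,11) .
  have ctn: "\<And>x. isCont n x" and ctp: "\<And>x. isCont p x" using SP(12,13) .
  have smallder: "\<And>B d. 0 < d \<Longrightarrow> \<exists>t\<ge>B. \<bar>p1 t\<bar> < d" using SP(14) unfolding p1_def .
  have pnn: "\<And>x. 0 \<le> x \<Longrightarrow> 0 \<le> p x" using SP(15) .
  have nbound: "n x - 1 \<le> t0" if x0: "0 \<le> x0" "p x0 \<le> a * e" "x0 \<le> x" for x0 x
  proof (rule ccontr)
    assume nx: "\<not> n x - 1 \<le> t0"
    have "eventually (\<lambda>z. n z < 1 + t0) at_top" using order_tendstoD(2)[OF nlim] t0 by simp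
    then obtain B where B: "\<And>z. z \<ge> B \<Longrightarrow> n z < 1 + t0" unfolding eventually_at_top_linorder by blast
    define z where "z = max x B"
    have "n z \<le> 1 + t0" using B[of z] unfolding z_def by simp
    moreover have "1 + t0 \<le> n x" using nx by simp
    moreover have "x \<le> z" unfolding z_def by simp
    ultimately obtain y where y: "x \<le> y" "y \<le> z" "n y = 1 + t0"
      using IVT2[of n z "1+t0" x] ctn by blast
    have "t0/2 \<le> hfun s c (1+t0)" using rb[OF e ee0 _ order.refl] t0 unfolding c_def by simp
    also have "\<dots> = p y" using hrel[of y] y by simp
    also have "\<dots> \<le> p x0" using pmono[of x0 y] x0 y by simp
    finally show False using x0 small1 by simp
  qed
  have rbnd: "\<bar>exp (p x) - n x - 2 * V * g * e * p x + V^2 * (p x)^2\<bar> \<le> Kp * e^2 * p x"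
    if x0: "0 \<le> x0" "p x0 \<le> a * e" "x0 \<le> x" for x0 x
  proof -
    define v where "v = n x - 1"
    have v0: "0 \<le> v" "v \<le> t0" using n1[of x] nbound[OF x0] x0 unfolding v_def by auto
    have nv: "1 + v = n x" unfolding v_def by simp
    note R = rb[OF e ee0 v0, folded c_def, unfolded nv, folded hrel]
    have px: "p x \<le> a * e" using pmono[of x0 x] x0 by simp
    have "e^2 * v + e * v^2 + v^3 \<le> 8 * (1 + a + a^2) * e^2 * p x"
      by (rule poly_ineq) (use v0 R px e a0 in auto)
    hence "K * (e^2 * v + e * v^2 + v^3) \<le> K * (8 * (1 + a + a^2) * e^2 * p x)" using K by (intro mult_left_mono) auto
    also have "\<dots> = Kp * e^2 * p x" unfolding Kp_def a_def by (simp add: algebra_simps)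
    finally show ?thesis using R unfolding nv[symmetric] by (simp add: algebra_simps)
  qed
  have Wb: "\<bar>Wf e V g (p x) (p1 x)\<bar> \<le> Kp * e^2 * (p x * p x)/2" if "0 \<le> x0" "p x0 \<le> a * e" "x0 \<le> x" for x0 x
    by (rule W_bound[OF dp dp1 pois p1neg pnn plim smallder, of x0 V g Kp])
       (use that rbnd e V1 g Kp0 in auto)
  have pA: "p 0 \<le> a * e"
  proof (rule ccontr)
    assume A: "\<not> p 0 \<le> a * e"
    have "eventually (\<lambda>z. p z < a * e) at_top" using order_tendstoD(2)[OF plim] a0 e by simp
    then obtain B where B: "\<And>z. z \<ge> B \<Longrightarrow> p z < a * e" unfolding eventually_at_top_linorder by blast
    define z where "z = max 0 B"
    obtain x1 where x1: "0 \<le> x1" "x1 \<le> z" "p x1 = a * e"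
      using IVT2[of p z "a * e" 0] ctp B[of z] A unfolding z_def by force
    have W1: "\<bar>Wf e V g (p x1) (p1 x1)\<bar> \<le> Kp * e^2 * (p x1 * p x1)/2"
      by (rule Wb[of x1 x1]) (use x1 in auto)
    have "Wf e V g (p x1) (p1 x1) \<ge> - V * g * e * (p x1 * p x1) + V^2 * (p x1 * p x1 * p x1)/3"
      unfolding Wf_def using e by simp
    also have "- V * g * e * (p x1 * p x1) + V^2 * (p x1 * p x1 * p x1)/3 = (a * e)^2 * (V * g * e)"
      unfolding x1(3) a_def V_def[symmetric] using V1 by (simp add: field_simps power2_eq_square)
    finally have "(a * e)^2 * (V * g * e) \<le> Kp * e^2 * (a * e)^2/2" using W1 x1(3) by (simp add: power2_eq_square)
    hence "(a * e)^2 * (V * g * e) \<le> (a * e)^2 * (Kp * e * e/2)" by (simp add: algebra_simps power2_eq_square)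
    hence "V * g * e \<le> Kp * e * e/2" using a0 e by (simp add: mult_le_cancel_left)
    hence "V * g \<le> Kp * e/2" using e by (simp add: field_simps)
    thus False using small2 by simp
  qed
  have Wb0: "\<And>x. 0 \<le> x \<Longrightarrow> \<bar>Wf e V g (p x) (p1 x)\<bar> \<le> Kp * e^2 * (p x * p x)/2"
    using Wb[of 0] pA by simp
  show "\<bar>deriv (\<lambda>x. p x - e * n_KdV s g x) x\<bar>^2 + \<bar>p x - e * n_KdV s g x\<bar>^2
     \<le> ((3 * Kp/(2 * V^2))^2 + (Kp * a)^2) * exp ((2 + (2 * V * g + 2 * a * V^2)) * x) * e^4" if x: "0 \<le> x" for x
  proof -
    have sm: "strict_antimono_on {0<..} p" using sw unfolding is_solitary_wave_def by simp
    have "p 1 < p (1/2)" using sm unfolding monotone_on_def by force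
    moreover have "p (1/2) \<le> p 0" using pmono[of 0 "1/2"] by simp
    moreover have "0 \<le> p 1" using pnn[of 1] by simp
    ultimately have p0pos: "0 < p 0" by simp
    define K4 where "K4 = 3 * Kp/(2 * V^2)"
    define A where "A = 3 * g / V"
    have init: "\<bar>p 0 / e - A\<bar> \<le> K4 * e"
    proof -
      have W0: "\<bar>Wf e V g (p 0) 0\<bar> \<le> Kp * e^2 * (p 0 * p 0)/2" using Wb0[of 0] p10 by simp
      have "Wf e V g (p 0) 0 = (p 0 * p 0) * (V^2 * p 0 / 3 - V * g * e)" unfolding Wf_def by (simp add: field_simps)
      hence "(p 0 * p 0) * \<bar>V^2 * p 0 / 3 - V * g * e\<bar> \<le> (p 0 * p 0) * (Kp * e^2/2)"
        using W0 by (simp add: abs_mult mult.commute mult.left_commute)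
      hence i: "\<bar>V^2 * p 0 / 3 - V * g * e\<bar> \<le> Kp * e^2/2" using p0pos by (simp add: mult_le_cancel_left)
      have "\<bar>p 0 / e - A\<bar> = \<bar>V^2 * p 0 / 3 - V * g * e\<bar> * (3 / (V^2 * e))"
      proof -
        have "p 0 / e - A = (V^2 * p 0 / 3 - V * g * e) * (3 / (V^2 * e))"
          unfolding A_def using V1 e by (simp add: field_simps power2_eq_square)
        hence "\<bar>p 0 / e - A\<bar> = \<bar>V^2 * p 0 / 3 - V * g * e\<bar> * \<bar>3 / (V^2 * e)\<bar>" by (simp only: abs_mult)
        moreover have "3 / (V^2 * e) > 0" using V1 e by simp
        ultimately show ?thesis by (simp only: abs_of_pos)
      qed
      also have "\<dots> \<le> (Kp * e^2/2) * (3 / (V^2 * e))" using i V1 e by (intro mult_right_mono) auto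
      also have "\<dots> = K4 * e" unfolding K4_def using V1 e by (simp add: field_simps power2_eq_square)
      finally show ?thesis .
    qed
    note NF = nkdv_facts[OF s g, folded V_def]
    define N1 where "N1 = (\<lambda>x. -2 * (3 * g/V) * sqrt (V * g/2) * sinh (sqrt (V * g/2) * x) / (cosh (sqrt (V * g/2) * x))^3)"
    have N: "\<And>x. (n_KdV s g has_real_derivative N1 x) (at x)"
      "\<And>x. (N1 has_real_derivative (2 * V * g * n_KdV s g x - V^2 * (n_KdV s g x)^2)) (at x)"
      "N1 0 = 0" "n_KdV s g 0 = A" "\<And>x. 0 \<le> n_KdV s g x" "\<And>x. n_KdV s g x \<le> A"
      unfolding N1_def A_def by (rule NF(1), rule NF(2), rule NF(3), rule NF(4), rule NF(5), rule NF(6))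
    define Nk where "Nk = n_KdV s g"
    define D where "D x = p x / e - Nk x" for x
    define D1 where "D1 x = p1 x / e - N1 x" for x
    define D2 where "D2 x = p2 x / e - (2 * V * g * Nk x - V^2 * (Nk x)^2)" for x
    define L where "L = 2 * V * g + 2 * a * V^2"
    have dD: "(D has_real_derivative D1 x) (at x)" for x
      unfolding D_def[abs_def] D1_def Nk_def by (rule DERIV_diff[OF DERIV_cdivide[OF dp] N(1)])
    have dD1: "(D1 has_real_derivative D2 x) (at x)" for x
      unfolding D1_def[abs_def] D2_def Nk_def by (rule DERIV_diff[OF DERIV_cdivide[OF dp1] N(2)])
    have Aa: "A \<le> a" unfolding A_def a_def V_def[symmetric] using g V1 by (simp add: divide_right_mono)
    have bd: "\<bar>D2 x\<bar> \<le> L * \<bar>D x\<bar> + Kp * a * e" if x: "0 \<le> x" for x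
    proof -
      define F where "F = p x / e"
      define r where "r = exp (p x) - n x - 2 * V * g * e * p x + V^2 * (p x)^2"
      have rb0: "\<bar>r\<bar> \<le> Kp * e^2 * p x" unfolding r_def using rbnd[of 0 x] pA x by simp
      have px: "0 \<le> p x" "p x \<le> a * e" using pnn[OF x] pmono[of 0 x] pA x by auto
      have F: "0 \<le> F" "F \<le> a" unfolding F_def using px e by (auto simp: field_simps)
      have Nx: "0 \<le> Nk x" "Nk x \<le> a" using N(5)[of x] N(6)[of x] Aa unfolding Nk_def by auto
      have p2e: "p2 x = (exp (p x) - n x) / e" using pois[of x] e by (simp add: field_simps)
      have e2: "D2 x = (2 * V * g - V^2 * (F + Nk x)) * D x + r / e^2"
        unfolding D2_def D_def r_def F_def p2e using e by (simp add: field_simps power2_eq_square)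
      have c1: "\<bar>2 * V * g - V^2 * (F + Nk x)\<bar> \<le> L"
      proof -
        have "0 \<le> V^2 * (F + Nk x)" using F Nx by simp
        moreover have "V^2 * (F + Nk x) \<le> V^2 * (2 * a)" using F Nx by (intro mult_left_mono) auto
        moreover have "0 \<le> 2 * V * g" using V1 g by simp
        ultimately show ?thesis unfolding L_def by (simp add: abs_le_iff algebra_simps)
      qed
      have c2: "\<bar>r / e^2\<bar> \<le> Kp * a * e"
      proof -
        have "\<bar>r / e^2\<bar> = \<bar>r\<bar> / e^2" by (simp add: abs_divide)
        also have "\<dots> \<le> Kp * e^2 * p x / e^2" using rb0 e by (intro divide_right_mono) auto
        also have "\<dots> = Kp * p x" using e by simp
        also have "\<dots> \<le> Kp * (a * e)" using px Kp0 by (intro mult_left_mono) auto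
        finally show ?thesis by (simp add: mult.assoc)
      qed
      have "\<bar>D2 x\<bar> \<le> \<bar>2 * V * g - V^2 * (F + Nk x)\<bar> * \<bar>D x\<bar> + \<bar>r / e^2\<bar>"
        unfolding e2 by (metis abs_mult abs_triangle_ineq)
      also have "\<dots> \<le> L * \<bar>D x\<bar> + Kp * a * e" using c1 c2 by (intro add_mono mult_right_mono) auto
      finally show ?thesis .
    qed
    have L0: "0 \<le> L" unfolding L_def using V1 g a0 by simp
    have G: "D x * D x + D1 x * D1 x \<le> (D 0 * D 0 + D1 0 * D1 0 + (Kp * a * e) * (Kp * a * e)) * exp ((2 + L) * x)"
    proof (rule gronwall_D[OF dD dD1 bd L0 _ x])
      show "0 \<le> Kp * a * e" using Kp0 a0 e by (intro mult_nonneg_nonneg) auto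
    qed
    have D10: "D1 0 = 0" unfolding D1_def using p10 N(3) by simp
    have D0: "D 0 * D 0 \<le> (K4 * e) * (K4 * e)"
    proof -
      have "\<bar>D 0\<bar> \<le> K4 * e" unfolding D_def Nk_def using init N(4) by simp
      hence "\<bar>D 0\<bar> * \<bar>D 0\<bar> \<le> (K4 * e) * (K4 * e)" by (intro mult_mono) auto
      thus ?thesis by (simp add: abs_mult[symmetric])
    qed
    have G2: "D x * D x + D1 x * D1 x \<le> (K4^2 + (Kp * a)^2) * e^2 * exp ((2 + L) * x)"
    proof -
      have "D 0 * D 0 + D1 0 * D1 0 + (Kp * a * e) * (Kp * a * e) \<le> (K4^2 + (Kp * a)^2) * e^2"
        using D0 D10 by (simp add: power2_eq_square algebra_simps)
      hence "(D 0 * D 0 + D1 0 * D1 0 + (Kp * a * e) * (Kp * a * e)) * exp ((2 + L) * x) \<le> (K4^2 + (Kp * a)^2) * e^2 * exp ((2 + L) * x)"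
        by (intro mult_right_mono) auto
      thus ?thesis using G by linarith
    qed
    have dfin: "deriv (\<lambda>x. p x - e * n_KdV s g x) x = e * D1 x"
    proof -
      have "((\<lambda>x. p x - e * n_KdV s g x) has_real_derivative p1 x - e * N1 x) (at x)"
        by (rule DERIV_diff[OF dp DERIV_cmult[OF N(1)]])
      hence "deriv (\<lambda>x. p x - e * n_KdV s g x) x = p1 x - e * N1 x" by (rule DERIV_imp_deriv)
      moreover have "e * D1 x = p1 x - e * N1 x" unfolding D1_def using e by (simp add: right_diff_distrib)
      ultimately show ?thesis by simp
    qed
    have pfin: "p x - e * n_KdV s g x = e * D x" unfolding D_def Nk_def using e by (simp add: field_simps)
    have "\<bar>deriv (\<lambda>x. p x - e * n_KdV s g x) x\<bar>^2 + \<bar>p x - e * n_KdV s g x\<bar>^2 = e^2 * (D x * D x + D1 x * D1 x)"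
      unfolding dfin pfin by (simp add: power2_eq_square algebra_simps)
    also have "\<dots> \<le> e^2 * ((K4^2 + (Kp * a)^2) * e^2 * exp ((2 + L) * x))" using G2 by (intro mult_left_mono) auto
    also have "\<dots> = ((3 * Kp/(2 * V^2))^2 + (Kp * a)^2) * exp ((2 + (2 * V * g + 2 * a * V^2)) * x) * e^4"
      unfolding K4_def L_def by (simp add: power2_eq_square power4_eq_xxxx algebra_simps)
    finally show ?thesis .
  qed
qed

theorem proposition4p5:
  fixes \<sigma> \<gamma> :: real
  assumes "\<sigma> \<ge> 0" and "\<gamma> > 0"
  shows "\<exists>\<epsilon>1>0. \<forall>\<xi>s>0. \<exists>C>0. \<forall>\<epsilon> n u \<phi>.
           0 < \<epsilon> \<and> \<epsilon> < \<epsilon>1 \<and> is_solitary_wave \<sigma> \<gamma> \<epsilon> n u \<phi> \<longrightarrow>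
           (\<forall>\<xi>\<in>{0..\<xi>s}.
              \<bar>deriv (\<lambda>x. \<phi> x - \<epsilon> * n_KdV \<sigma> \<gamma> x) \<xi>\<bar>^2
              + \<bar>\<phi> \<xi> - \<epsilon> * n_KdV \<sigma> \<gamma> \<xi>\<bar>^2 \<le> C * \<epsilon>^4)"
proof -
  define V where "V = wave_speed \<sigma>"
  have V1: "V \<ge> 1" unfolding V_def wave_speed_def using assms by simp
  have Vs: "sqrt (1 + \<sigma>) = V" unfolding V_def wave_speed_def ..
  obtain K t0 e0 where K: "K > 0" and t0: "t0 > 0" and e0: "e0 > 0" and "t0 \<le> 1/2" and "e0 \<le> 1"
    and RB: "\<And>e v. 0 < e \<Longrightarrow> e \<le> e0 \<Longrightarrow> 0 \<le> v \<Longrightarrow> v \<le> t0 \<Longrightarrow>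
       v/2 \<le> hfun \<sigma> (V+\<gamma>*e) (1+v) \<and> hfun \<sigma> (V+\<gamma>*e) (1+v) \<le> 2 * v \<and>
       \<bar>exp (hfun \<sigma> (V+\<gamma>*e) (1+v)) - 1 - v - 2 * V*\<gamma>*e * hfun \<sigma> (V+\<gamma>*e) (1+v) + V^2 * (hfun \<sigma> (V+\<gamma>*e) (1+v))^2\<bar>
         \<le> K * (e^2 * v + e * v^2 + v^3)"
    apply (rule rbound[OF assms, unfolded Vs])
    subgoal premises P by (rule P(1)[OF P(2) P(3) P(4) P(5) P(6) P(7)])
    done
  define a where "a = 6*\<gamma>/V"
  define Kp where "Kp = 8 * K * (1 + a + a^2)"
  have a0: "a > 0" unfolding a_def using V1 assms by simp
  have Kp0: "Kp > 0" unfolding Kp_def using K a0 by (simp add: add_pos_nonneg)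
  define e1 where "e1 = min e0 (min (t0/(4 * a)) (V*\<gamma>/(Kp+1)))"
  have e10: "e1 > 0" unfolding e1_def using e0 t0 a0 V1 assms Kp0 by simp
  show ?thesis
  proof (rule exI[of _ e1], intro conjI allI impI)
    show "0 < e1" by (rule e10)
    fix \<xi>s :: real assume xs: "0 < \<xi>s"
    define L where "L = 2 * V*\<gamma> + 2 * a * V^2"
    define C0 where "C0 = (3 * Kp/(2 * V^2))^2 + (Kp * a)^2"
    have C00: "0 \<le> C0" unfolding C0_def by simp
    show "\<exists>C>0. \<forall>\<epsilon> n u \<phi>.
           0 < \<epsilon> \<and> \<epsilon> < e1 \<and> is_solitary_wave \<sigma> \<gamma> \<epsilon> n u \<phi> \<longrightarrow>
           (\<forall>\<xi>\<in>{0..\<xi>s}.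
              \<bar>deriv (\<lambda>x. \<phi> x - \<epsilon> * n_KdV \<sigma> \<gamma> x) \<xi>\<bar>^2
              + \<bar>\<phi> \<xi> - \<epsilon> * n_KdV \<sigma> \<gamma> \<xi>\<bar>^2 \<le> C * \<epsilon>^4)"
    proof (intro exI[of _ "C0 * exp ((2 + L) * \<xi>s) + 1"] conjI allI impI ballI)
      show "0 < C0 * exp ((2 + L) * \<xi>s) + 1" using C00 by (simp add: add_nonneg_pos)
      fix \<epsilon> n u \<phi> \<xi>
      assume H: "0 < \<epsilon> \<and> \<epsilon> < e1 \<and> is_solitary_wave \<sigma> \<gamma> \<epsilon> n u \<phi>" and xi: "\<xi> \<in> {0..\<xi>s}"
      have e: "0 < \<epsilon>" and ee1: "\<epsilon> < e1" and sw: "is_solitary_wave \<sigma> \<gamma> \<epsilon> n u \<phi>" using H by auto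
      have ee0: "\<epsilon> \<le> e0" using ee1 unfolding e1_def by simp
      have small1: "a * \<epsilon> < t0/2"
      proof -
        have "\<epsilon> < t0/(4 * a)" using ee1 unfolding e1_def by simp
        hence "a * \<epsilon> < t0/4" using a0 by (simp add: field_simps)
        thus ?thesis using t0 by simp
      qed
      have small2: "Kp * \<epsilon> / 2 < V * \<gamma>"
      proof -
        have "\<epsilon> < V*\<gamma>/(Kp+1)" using ee1 unfolding e1_def by simp
        hence "(Kp+1) * \<epsilon> < V * \<gamma>" using Kp0 by (simp add: field_simps)
        moreover have "Kp * \<epsilon> / 2 \<le> (Kp+1) * \<epsilon>" using Kp0 e by (simp add: field_simps)
        ultimately show ?thesis by simp
      qed
      have B: "\<bar>deriv (\<lambda>x. \<phi> x - \<epsilon> * n_KdV \<sigma> \<gamma> x) \<xi>\<bar>^2 + \<bar>\<phi> \<xi> - \<epsilon> * n_KdV \<sigma> \<gamma> \<xi>\<bar>^2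
         \<le> C0 * exp ((2 + L) * \<xi>) * \<epsilon>^4"
        using per_sol[OF assms e sw RB[unfolded V_def] K t0 ee0 small1[unfolded a_def V_def] small2[unfolded Kp_def a_def V_def], of \<xi>]
          xi unfolding C0_def L_def Kp_def a_def V_def by simp
      have "C0 * exp ((2 + L) * \<xi>) * \<epsilon>^4 \<le> (C0 * exp ((2 + L) * \<xi>s) + 1) * \<epsilon>^4"
      proof (rule mult_right_mono)
        have L0: "0 \<le> 2 + L" unfolding L_def using V1 a0 assms by simp
        have "exp ((2 + L) * \<xi>) \<le> exp ((2 + L) * \<xi>s)" using xi L0 by (simp add: mult_left_mono)
        hence "C0 * exp ((2 + L) * \<xi>) \<le> C0 * exp ((2 + L) * \<xi>s)" using C00 by (rule mult_left_mono)
        thus "C0 * exp ((2 + L) * \<xi>) \<le> C0 * exp ((2 + L) * \<xi>s) + 1" by simp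
      qed simp
      with B show "\<bar>deriv (\<lambda>x. \<phi> x - \<epsilon> * n_KdV \<sigma> \<gamma> x) \<xi>\<bar>^2
              + \<bar>\<phi> \<xi> - \<epsilon> * n_KdV \<sigma> \<gamma> \<xi>\<bar>^2 \<le> (C0 * exp ((2 + L) * \<xi>s) + 1) * \<epsilon>^4" by linarith
    qed
  qed
qed

end
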